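(* Let $\mathbf A$ be a pseudo-Kleene lattice. Then $\mathbf A$ is super-paraorthomodular if and only if for all $x,y\in A$: $x\leq y$ implies $y\land(x\lor x')=x\lor(x'\land y)$.
   Context: A pseudo-Kleene lattice is an algebra $(A,\land,\lor,{}',0,1)$ that is a bounded lattice with an antitone involution ${}'$ ($x\leq y\Rightarrow y'\leq x'$, $x''=x$) satisfying $x\land x'\leq y\lor y'$. It is super-paraorthomodular if for all $x,y$: (SP1) $x\leq y$ and $x'\land y=(x\land x')\lor(y\land y')$ imply $y\land(x\lor x')=x\lor(y\land y')$; (SP2) $x\leq y$ implies $(x\land x')\lor(y\land y')=(x'\land y)\land(x'\land y)'$. *)

theory Defs
  imports Main
begin

class pseudo_kleene_lattice = bounded_lattice +
  fixes cmpl :: "'a \<Rightarrow> 'a"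
  assumes cmpl_antitone: "x \<le> y \<Longrightarrow> cmpl y \<le> cmpl x"
    and cmpl_involutive: "cmpl (cmpl x) = x"
    and kleene: "inf x (cmpl x) \<le> sup y (cmpl y)"

definition super_paraorthomodular :: "('a::pseudo_kleene_lattice) itself \<Rightarrow> bool" where
  "super_paraorthomodular _ \<longleftrightarrow>
     (\<forall>x y :: 'a.
        x \<le> y \<and> inf (cmpl x) y = sup (inf x (cmpl x)) (inf y (cmpl y))
        \<longrightarrow> inf y (sup x (cmpl x)) = sup x (inf y (cmpl y))) \<and>
     (\<forall>x y :: 'a.
        x \<le> y \<longrightarrow> sup (inf x (cmpl x)) (inf y (cmpl y))
                    = inf (inf (cmpl x) y) (cmpl (inf (cmpl x) y)))"

end

theory Submission
  imports Defs
begin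

context pseudo_kleene_lattice
begin

lemma cmpl_le_iff: "cmpl x \<le> cmpl y \<longleftrightarrow> y \<le> x"
  by (metis cmpl_antitone cmpl_involutive)

lemma cmpl_sup: "cmpl (sup x y) = inf (cmpl x) (cmpl y)"
proof (rule order.antisym)
  show "cmpl (sup x y) \<le> inf (cmpl x) (cmpl y)"
    by (simp add: cmpl_antitone)
  have "inf (cmpl x) (cmpl y) \<le> cmpl (sup x y) \<longleftrightarrow> sup x y \<le> cmpl (inf (cmpl x) (cmpl y))"
    by (metis cmpl_le_iff cmpl_involutive)
  moreover have "sup x y \<le> cmpl (inf (cmpl x) (cmpl y))"
    by (metis cmpl_le_iff cmpl_involutive inf_le1 inf_le2 sup_least)
  ultimately show "inf (cmpl x) (cmpl y) \<le> cmpl (sup x y)" by blast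
qed

lemma cmpl_inf: "cmpl (inf x y) = sup (cmpl x) (cmpl y)"
  by (metis cmpl_sup cmpl_involutive)

lemma dir1:
  assumes C: "\<And>x y. x \<le> y \<Longrightarrow> inf y (sup x (cmpl x)) = sup x (inf (cmpl x) y)"
    and xy: "x \<le> y"
  shows "sup (inf x (cmpl x)) (inf y (cmpl y)) = inf (inf (cmpl x) y) (cmpl (inf (cmpl x) y))"
proof -
  have yx: "cmpl y \<le> cmpl x" using xy by (rule cmpl_antitone)
  have c1: "inf (cmpl x) (sup (cmpl y) y) = sup (cmpl y) (inf y (cmpl x))"
    using C[OF yx] by (simp add: cmpl_involutive)
  have c2: "inf (sup y (cmpl y)) (sup x (cmpl x)) = sup x (inf (cmpl x) (sup y (cmpl y)))"
    using C[of x "sup y (cmpl y)"] xy by (meson le_supI1)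
  have "sup (inf (cmpl x) y) (cmpl (inf (cmpl x) y)) = sup x (sup (cmpl y) (inf y (cmpl x)))"
    by (simp add: cmpl_inf cmpl_involutive inf_commute sup_commute sup_left_commute)
  also have "\<dots> = sup x (inf (cmpl x) (sup y (cmpl y)))"
    using c1 by (simp add: sup_commute)
  also have "\<dots> = inf (sup x (cmpl x)) (sup y (cmpl y))"
    using c2 by (simp add: inf_commute)
  finally have e: "sup (inf (cmpl x) y) (cmpl (inf (cmpl x) y)) = inf (sup x (cmpl x)) (sup y (cmpl y))" .
  have "inf (inf (cmpl x) y) (cmpl (inf (cmpl x) y)) = cmpl (sup (inf (cmpl x) y) (cmpl (inf (cmpl x) y)))"
    by (simp add: cmpl_sup cmpl_involutive inf_commute)
  also have "\<dots> = sup (inf x (cmpl x)) (inf y (cmpl y))"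
    unfolding e by (simp add: cmpl_inf cmpl_sup cmpl_involutive inf_commute)
  finally show ?thesis by simp
qed

lemma dir2:
  assumes S1: "\<And>x y. x \<le> y \<and> inf (cmpl x) y = sup (inf x (cmpl x)) (inf y (cmpl y))
        \<Longrightarrow> inf y (sup x (cmpl x)) = sup x (inf y (cmpl y))"
    and S2: "\<And>x y. x \<le> y \<Longrightarrow> sup (inf x (cmpl x)) (inf y (cmpl y))
                    = inf (inf (cmpl x) y) (cmpl (inf (cmpl x) y))"
    and xy: "x \<le> y"
  shows "inf y (sup x (cmpl x)) = sup x (inf (cmpl x) y)"
proof -
  define a where "a = inf (cmpl x) y"
  define b where "b = inf a (cmpl a)"
  define p where "p = sup x a"
  define q where "q = inf y (sup x (cmpl x))"
  have ca: "cmpl a = sup x (cmpl y)" unfolding a_def by (simp add: cmpl_inf cmpl_involutive)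
  have bS: "sup (inf x (cmpl x)) (inf y (cmpl y)) = b" using S2[OF xy] unfolding b_def a_def by simp
  have ba: "b \<le> a" unfolding b_def by simp
  have pq: "p \<le> q" unfolding p_def q_def a_def using xy
    by (simp add: le_infI1 le_supI2)
  have cp: "cmpl p = inf (cmpl x) (cmpl a)" unfolding p_def by (simp add: cmpl_sup)
  have bk: "b \<le> sup x (cmpl x)" unfolding b_def by (rule kleene)
  have h1: "inf (cmpl p) q = b"
  proof -
    have "inf (cmpl p) q = inf (inf (inf (cmpl x) y) (cmpl a)) (sup x (cmpl x))"
      unfolding cp q_def by (simp add: inf_aci)
    also have "\<dots> = inf b (sup x (cmpl x))" unfolding b_def a_def by simp
    also have "\<dots> = b" using bk by (simp add: inf_absorb1)
    finally show ?thesis .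
  qed
  have h2: "inf p (cmpl p) = b"
  proof -
    have py: "p \<le> y" using pq unfolding q_def by simp
    have "inf p b = inf (inf p y) (inf (cmpl x) (cmpl a))"
      unfolding b_def a_def by (simp add: inf_aci)
    also have "\<dots> = inf p (cmpl p)" using py cp by (simp add: inf_absorb1)
    finally have "inf p (cmpl p) = inf p b" by simp
    also have "\<dots> = b" using ba unfolding p_def by (simp add: inf_absorb2 le_supI2)
    finally show ?thesis .
  qed
  have cq: "cmpl q = sup (cmpl y) (inf x (cmpl x))"
    unfolding q_def by (simp add: cmpl_inf cmpl_sup cmpl_involutive inf_commute)
  have h3: "inf q (cmpl q) \<le> b"
  proof -
    have "cmpl y \<le> cmpl x" using xy by (rule cmpl_antitone)
    hence "cmpl q \<le> cmpl x" unfolding cq by simp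
    moreover have "cmpl q \<le> cmpl a" unfolding cq ca by (simp add: le_supI1 le_supI2)
    moreover have "q \<le> y" unfolding q_def by simp
    ultimately have "inf q (cmpl q) \<le> inf (inf (cmpl x) y) (cmpl a)"
      by (meson inf_le1 inf_le2 le_inf_iff order_trans)
    thus ?thesis unfolding b_def a_def by simp
  qed
  have "inf q (sup p (cmpl p)) = sup p (inf q (cmpl q))"
    using S1[of p q] pq h1 h2 h3 by (simp add: sup_absorb1)
  also have "\<dots> = p" using h3 ba unfolding p_def
    by (meson order_trans sup.absorb1 sup.coboundedI2)
  finally have e: "inf q (sup p (cmpl p)) = p" .
  have "sup p (cmpl p) = cmpl b" using h2 by (metis cmpl_inf cmpl_involutive sup_commute)
  also have "\<dots> = inf (sup x (cmpl x)) (sup y (cmpl y))"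
    unfolding bS[symmetric] by (simp add: cmpl_inf cmpl_sup cmpl_involutive sup_commute)
  finally have "q \<le> sup p (cmpl p)" unfolding q_def
    by (simp add: le_supI1)
  hence "q = p" using e by (simp add: inf_absorb1)
  thus ?thesis unfolding q_def p_def a_def .
qed

end

theorem theorem3p4:
  "super_paraorthomodular TYPE('a::pseudo_kleene_lattice) \<longleftrightarrow>
     (\<forall>x y :: 'a. x \<le> y \<longrightarrow> inf y (sup x (cmpl x)) = sup x (inf (cmpl x) y))"
proof
  assume "super_paraorthomodular TYPE('a)"
  hence S1: "\<And>x y::'a. x \<le> y \<and> inf (cmpl x) y = sup (inf x (cmpl x)) (inf y (cmpl y))
        \<Longrightarrow> inf y (sup x (cmpl x)) = sup x (inf y (cmpl y))"
    and S2: "\<And>x y::'a. x \<le> y \<Longrightarrow> sup (inf x (cmpl x)) (inf y (cmpl y))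
                    = inf (inf (cmpl x) y) (cmpl (inf (cmpl x) y))"
    unfolding super_paraorthomodular_def by blast+
  show "\<forall>x y :: 'a. x \<le> y \<longrightarrow> inf y (sup x (cmpl x)) = sup x (inf (cmpl x) y)"
    using dir2[OF S1 S2] by blast
next
  assume C0: "\<forall>x y :: 'a. x \<le> y \<longrightarrow> inf y (sup x (cmpl x)) = sup x (inf (cmpl x) y)"
  hence C: "\<And>x y :: 'a. x \<le> y \<Longrightarrow> inf y (sup x (cmpl x)) = sup x (inf (cmpl x) y)" by blast
  have P1: "\<And>x y :: 'a. x \<le> y \<and> inf (cmpl x) y = sup (inf x (cmpl x)) (inf y (cmpl y))
        \<longrightarrow> inf y (sup x (cmpl x)) = sup x (inf y (cmpl y))"
  proof
    fix x y :: 'a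
    assume h: "x \<le> y \<and> inf (cmpl x) y = sup (inf x (cmpl x)) (inf y (cmpl y))"
    have "inf y (sup x (cmpl x)) = sup x (sup (inf x (cmpl x)) (inf y (cmpl y)))"
      using C h by metis
    also have "\<dots> = sup x (inf y (cmpl y))" by (simp add: sup_absorb1 sup_assoc[symmetric])
    finally show "inf y (sup x (cmpl x)) = sup x (inf y (cmpl y))" .
  qed
  show "super_paraorthomodular TYPE('a)"
    unfolding super_paraorthomodular_def using P1 dir1[OF C] by blast
qed

end
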